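(* Assume $\mu$ satisfies (C). Let $S(\Gamma):=\{\log\lambda_{\mathbf a}:\mathbf a\in\Gamma,\ \mathbf a\text{ has all entries strictly positive}\}$, where $\lambda_{\mathbf a}$ is the Perron–Frobenius (dominant) eigenvalue of $\mathbf a$. If the additive subgroup of $\mathbb R$ generated by $S(\Gamma)$ is dense in $\mathbb R$, then $\mu$ is non-arithmetic.
   Context: Let $|\cdot|$ be a norm on $\mathbb R^d$. $\mu$ is a probability measure on real $d\times d$ matrices, $\Gamma$ the closed semigroup generated by $\operatorname{supp}\mu$. Condition (C): $\mu$ is supported on nonnegative matrices, every matrix of $\Gamma$ is allowable (each row and column has a positive entry), and $\Gamma$ contains a matrix with all entries strictly positive. $\mathcal S_+:=\{x\in\mathbb R^d:x_i\ge0,|x|=1\}$, $\mathbf a\cdot x:=\mathbf ax/|\mathbf ax|$, $V(\Gamma)$ = closure of the set of normalized Perron–Frobenius eigenvectors $v_{\mathbf a}\in\mathcal S_+$ of matrices $\mathbf a\in\Gamma$ with all entries positive. $\mu$ is arithmetic if there exist $t>0$, $\theta\in[0,2\pi)$ and a function $\vartheta:\mathcal S_+\to\mathbb R$ with $\exp(it\log|\mathbf ax|-i\theta+i(\vartheta(\mathbf a\cdot x)-\vartheta(x)))=1$ for all $\mathbf a\in\Gamma$, $x\in V(\Gamma)$; otherwise non-arithmetic. *)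

theory Defs
  imports "HOL-Probability.Probability"
begin

definition is_norm :: "(real^'d \<Rightarrow> real) \<Rightarrow> bool" where
  "is_norm N \<longleftrightarrow> (\<forall>x. N x \<ge> 0) \<and> (\<forall>x. N x = 0 \<longleftrightarrow> x = 0)
     \<and> (\<forall>c x. N (c *\<^sub>R x) = \<bar>c\<bar> * N x) \<and> (\<forall>x y. N (x + y) \<le> N x + N y)"

definition msupp :: "('a::topological_space) measure \<Rightarrow> 'a set" where
  "msupp M = {a. \<forall>U. open U \<longrightarrow> a \<in> U \<longrightarrow> emeasure M U > 0}"

inductive_set sgen :: "(real^'d^'d) set \<Rightarrow> (real^'d^'d) set" for A where
  base: "a \<in> A \<Longrightarrow> a \<in> sgen A"
| mult: "a \<in> sgen A \<Longrightarrow> b \<in> sgen A \<Longrightarrow> a ** b \<in> sgen A"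

definition Gam :: "(real^'d^'d) measure \<Rightarrow> (real^'d^'d) set" where
  "Gam M = closure (sgen (msupp M))"

definition nonneg_mat :: "real^'d^'d \<Rightarrow> bool" where
  "nonneg_mat a \<longleftrightarrow> (\<forall>i j. a $ i $ j \<ge> 0)"

definition pos_mat :: "real^'d^'d \<Rightarrow> bool" where
  "pos_mat a \<longleftrightarrow> (\<forall>i j. a $ i $ j > 0)"

definition allowable :: "real^'d^'d \<Rightarrow> bool" where
  "allowable a \<longleftrightarrow> (\<forall>i. \<exists>j. a $ i $ j > 0) \<and> (\<forall>j. \<exists>i. a $ i $ j > 0)"

definition cond_C :: "(real^'d^'d) measure \<Rightarrow> bool" where
  "cond_C M \<longleftrightarrow> (\<forall>a \<in> msupp M. nonneg_mat a) \<and> (\<forall>a \<in> Gam M. allowable a)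
     \<and> (\<exists>a \<in> Gam M. pos_mat a)"

definition S_plus :: "(real^'d \<Rightarrow> real) \<Rightarrow> (real^'d) set" where
  "S_plus N = {x. (\<forall>i. x $ i \<ge> 0) \<and> N x = 1}"

definition act :: "(real^'d \<Rightarrow> real) \<Rightarrow> real^'d^'d \<Rightarrow> real^'d \<Rightarrow> real^'d" where
  "act N a x = (1 / N (a *v x)) *\<^sub>R (a *v x)"

definition cplx_eigenvalue :: "real^'d^'d \<Rightarrow> complex \<Rightarrow> bool" where
  "cplx_eigenvalue a c \<longleftrightarrow> (\<exists>z::complex^'d. z \<noteq> 0 \<and>
      (\<chi> i. \<Sum>j\<in>UNIV. complex_of_real (a $ i $ j) * z $ j) = (\<chi> i. c * z $ i))"

definition pf_eigenvalue :: "real^'d^'d \<Rightarrow> real" where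
  "pf_eigenvalue a = (THE l. cplx_eigenvalue a (complex_of_real l) \<and>
      (\<forall>c. cplx_eigenvalue a c \<longrightarrow> cmod c \<le> l))"

definition pf_vector :: "(real^'d \<Rightarrow> real) \<Rightarrow> real^'d^'d \<Rightarrow> real^'d" where
  "pf_vector N a = (THE v. v \<in> S_plus N \<and> a *v v = pf_eigenvalue a *\<^sub>R v)"

definition V_Gam :: "(real^'d \<Rightarrow> real) \<Rightarrow> (real^'d^'d) measure \<Rightarrow> (real^'d) set" where
  "V_Gam N M = closure {pf_vector N a | a. a \<in> Gam M \<and> pos_mat a}"

definition arithmetic :: "(real^'d \<Rightarrow> real) \<Rightarrow> (real^'d^'d) measure \<Rightarrow> bool" where
  "arithmetic N M \<longleftrightarrow> (\<exists>t \<theta> (phi::real^'d \<Rightarrow> real). t > 0 \<and> 0 \<le> \<theta> \<and> \<theta> < 2 * pi \<and>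
     (\<forall>a \<in> Gam M. \<forall>x \<in> V_Gam N M.
        exp (\<i> * complex_of_real (t * ln (N (a *v x)) - \<theta> + (phi (act N a x) - phi x))) = 1))"

definition S_Gam :: "(real^'d^'d) measure \<Rightarrow> real set" where
  "S_Gam M = {ln (pf_eigenvalue a) | a. a \<in> Gam M \<and> pos_mat a}"

definition add_subgroup_gen :: "real set \<Rightarrow> real set" where
  "add_subgroup_gen S = \<Inter>{G. S \<subseteq> G \<and> 0 \<in> G \<and> (\<forall>x\<in>G. \<forall>y\<in>G. x + y \<in> G) \<and> (\<forall>x\<in>G. - x \<in> G)}"

end

theory Submission
  imports Defs
begin

lemma cont_mmult: "continuous_on UNIV (\<lambda>p::(real^'d^'d) \<times> (real^'d^'d). fst p ** snd p)"
  unfolding matrix_matrix_mult_def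
  by (intro continuous_intros)

lemma Gam_mult:
  assumes "a \<in> Gam M" "b \<in> Gam M"
  shows "a ** b \<in> Gam M"
proof -
  let ?S = "sgen (msupp M)"
  have "(\<lambda>p. fst p ** snd p) ` closure (?S \<times> ?S) \<subseteq> closure ?S"
    apply (rule image_closure_subset)
    using cont_mmult continuous_on_subset apply blast
     apply simp
    using closure_subset sgen.mult by fastforce
  moreover have "(a, b) \<in> closure (?S \<times> ?S)" using assms by (simp add: closure_Times Gam_def)
  ultimately show ?thesis unfolding Gam_def by force
qed

lemma mv_pos:
  fixes a :: "real^'d^'d" and x :: "real^'d"
  assumes "pos_mat a" "\<forall>i. 0 \<le> x$i" "x$j > 0"
  shows "(a *v x)$i > 0"
proof -
  have "(a *v x)$i = (\<Sum>k\<in>UNIV. a$i$k * x$k)" by (simp add: matrix_vector_mult_def)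
  also have "\<dots> > 0"
  proof (rule sum_pos2[where i=j])
    show "0 < a$i$j * x$j" using assms unfolding pos_mat_def by simp
    show "\<And>k. k \<in> UNIV \<Longrightarrow> 0 \<le> a$i$k * x$k" using assms unfolding pos_mat_def
      by (simp add: less_imp_le)
  qed auto
  finally show ?thesis .
qed

lemma pf_exists:
  fixes a :: "real^'d^'d"
  assumes "pos_mat a"
  shows "\<exists>l v. l > 0 \<and> (\<forall>i. v$i > 0) \<and> a *v v = l *\<^sub>R v"
proof -
  define D where "D = {x::real^'d. (\<forall>i. 0 \<le> x$i) \<and> (\<Sum>i\<in>UNIV. x$i) = 1}"
  define f where "f x = (1 / (\<Sum>i\<in>UNIV. (a *v x)$i)) *\<^sub>R (a *v x)" for x
  have ex: "\<exists>j. x$j > 0" if "x \<in> D" for x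
  proof (rule ccontr)
    assume "\<not> ?thesis"
    then have "\<forall>j. x$j = 0" using that unfolding D_def by (force simp: not_less intro: order_antisym)
    then show False using that unfolding D_def by simp
  qed
  have ax: "(a *v x)$i > 0" if "x \<in> D" for x i
    using ex[OF that] that mv_pos[OF assms] unfolding D_def by blast
  have spos: "(\<Sum>i\<in>UNIV. (a *v x)$i) > 0" if "x \<in> D" for x
    using ax[OF that] by (simp add: sum_pos)
  have "closed D" unfolding D_def
    by (intro closed_Collect_conj closed_Collect_all closed_Collect_le closed_Collect_eq continuous_intros) 
  moreover have "bounded D"
  proof -
    have "D \<subseteq> cball 0 (real CARD('d))"
    proof
      fix x assume x: "x \<in> D"
      have "\<bar>x$i\<bar> \<le> 1" for i
      proof -
        have "x$i \<le> (\<Sum>i\<in>UNIV. x$i)"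
          by (rule member_le_sum) (use x D_def in auto)
        then show ?thesis using x D_def by auto
      qed
      then have "(\<Sum>i\<in>UNIV. \<bar>x$i\<bar>) \<le> (\<Sum>i\<in>(UNIV::'d set). (1::real))"
        by (intro sum_mono) auto
      then have "norm x \<le> (\<Sum>i\<in>(UNIV::'d set). (1::real))"
        using norm_le_l1_cart[of x] by linarith
      then show "x \<in> cball 0 (real CARD('d))" by simp
    qed
    then show ?thesis using bounded_cball bounded_subset by blast
  qed
  ultimately have "compact D" using compact_eq_bounded_closed by blast
  moreover have "convex D" unfolding convex_def
  proof (intro ballI allI impI)
    fix x y :: "real^'d" and u v :: real
    assume x: "x \<in> D" and y: "y \<in> D" and uv: "0 \<le> u" "0 \<le> v" "u + v = 1"
    have "(\<Sum>i\<in>UNIV. (u *\<^sub>R x + v *\<^sub>R y) $ i) = u * (\<Sum>i\<in>UNIV. x$i) + v * (\<Sum>i\<in>UNIV. y$i)"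
      by (simp add: sum.distrib sum_distrib_left)
    then show "u *\<^sub>R x + v *\<^sub>R y \<in> D" using x y uv unfolding D_def by simp
  qed
  moreover have "D \<noteq> {}"
  proof -
    have "(\<chi> i. 1 / real CARD('d)) \<in> D" unfolding D_def by simp
    then show ?thesis by blast
  qed
  moreover have "continuous_on D f" unfolding f_def
    by (intro continuous_intros) (use spos in force)
  moreover have "f \<in> D \<rightarrow> D"
  proof
    fix x assume x: "x \<in> D"
    have "\<forall>i. 0 \<le> f x $ i" unfolding f_def using ax[OF x] spos[OF x] by (simp add: less_imp_le)
    moreover have "(\<Sum>i\<in>UNIV. f x $ i) = 1" unfolding f_def using spos[OF x]
      by (simp add: sum_divide_distrib[symmetric])
    ultimately show "f x \<in> D" unfolding D_def by blast
  qed
  ultimately obtain x where x: "x \<in> D" "f x = x" by (rule brouwer)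
  define l where "l = (\<Sum>i\<in>UNIV. (a *v x)$i)"
  have l: "l > 0" using spos[OF x(1)] l_def by simp
  have "a *v x = l *\<^sub>R ((1/l) *\<^sub>R (a *v x))" using l by simp
  then have eq: "a *v x = l *\<^sub>R x" using x(2) unfolding f_def l_def[symmetric] by simp
  have "\<forall>i. x$i > 0"
  proof
    fix i
    have "(l *\<^sub>R x)$i > 0" using ax[OF x(1), of i] eq by simp
    then show "x$i > 0" using l by (simp add: zero_less_mult_iff)
  qed
  then show ?thesis using l eq by blast
qed

lemma pf_dom:
  fixes a :: "real^'d^'d"
  assumes pa: "pos_mat a" and w: "\<forall>i. w$i > 0" and aw: "a *v w = l *\<^sub>R w"
    and ce: "cplx_eigenvalue a c"
  shows "cmod c \<le> l"
proof -
  obtain z :: "complex^'d" where z0: "z \<noteq> 0"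
    and eq: "(\<chi> i. \<Sum>j\<in>UNIV. complex_of_real (a $ i $ j) * z $ j) = (\<chi> i. c * z $ i)"
    using ce unfolding cplx_eigenvalue_def by blast
  have hz: "(\<Sum>j\<in>UNIV. complex_of_real (a $ i $ j) * z $ j) = c * z $ i" for i
    using eq by (simp add: vec_eq_iff)
  define r where "r j = cmod (z$j) / w$j" for j
  define M where "M = Max (range r)"
  have "M \<in> range r" unfolding M_def by (rule Max_in) auto
  then obtain k where k: "r k = M" by auto
  have rle: "r j \<le> r k" for j unfolding k M_def by (rule Max_ge) auto
  obtain j0 where "z$j0 \<noteq> 0" using z0 by (metis vec_eq_iff zero_index)
  then have "r j0 > 0" unfolding r_def using w by simp
  then have rk: "r k > 0" using rle[of j0] by simp
  have zk: "cmod (z$k) = r k * w$k" unfolding r_def using w by (simp add: less_imp_neq[symmetric])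
  then have zkpos: "cmod (z$k) > 0" using rk w by simp
  have zj: "cmod (z$j) \<le> r k * w$j" for j
    using rle[of j] w unfolding r_def by (simp add: divide_le_eq mult.commute)
  have "cmod c * cmod (z$k) = cmod (\<Sum>j\<in>UNIV. complex_of_real (a $ k $ j) * z $ j)"
    using hz[of k] by (simp add: norm_mult)
  also have "\<dots> \<le> (\<Sum>j\<in>UNIV. cmod (complex_of_real (a $ k $ j) * z $ j))"
    by (rule norm_sum)
  also have "\<dots> = (\<Sum>j\<in>UNIV. a $ k $ j * cmod (z $ j))"
    using pa unfolding pos_mat_def by (simp add: norm_mult less_imp_le)
  also have "\<dots> \<le> (\<Sum>j\<in>UNIV. a $ k $ j * (r k * w$j))"
    using pa zj unfolding pos_mat_def by (intro sum_mono mult_left_mono) (auto simp: less_imp_le)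
  also have "\<dots> = r k * (a *v w)$k"
    by (simp add: matrix_vector_mult_def sum_distrib_left mult_ac)
  also have "\<dots> = l * cmod (z$k)" using aw zk by simp
  finally have "cmod c * cmod (z$k) \<le> l * cmod (z$k)" .
  then show ?thesis using zkpos by simp
qed

lemma pf_eig:
  fixes a :: "real^'d^'d"
  assumes pa: "pos_mat a"
  shows "pf_eigenvalue a > 0 \<and> (\<exists>w. (\<forall>i. w$i > 0) \<and> a *v w = pf_eigenvalue a *\<^sub>R w)"
proof -
  obtain l w where l: "l > 0" and w: "\<forall>i. w$i > 0" and aw: "a *v w = l *\<^sub>R w"
    using pf_exists[OF pa] by blast
  have ce: "cplx_eigenvalue a (complex_of_real l)"
    unfolding cplx_eigenvalue_def
  proof (intro exI conjI)
    let ?z = "\<chi> i. complex_of_real (w$i)"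
    obtain i0 :: 'd where True by simp
    show "?z \<noteq> 0" using w by (metis less_irrefl of_real_eq_0_iff vec_lambda_beta zero_index)
    have "(\<Sum>j\<in>UNIV. complex_of_real (a $ i $ j) * ?z $ j) = complex_of_real l * ?z $ i" for i
    proof -
      have "(\<Sum>j\<in>UNIV. complex_of_real (a $ i $ j) * ?z $ j) = complex_of_real ((a *v w)$i)"
        by (simp add: matrix_vector_mult_def)
      then show ?thesis using aw by simp
    qed
    then show "(\<chi> i. \<Sum>j\<in>UNIV. complex_of_real (a $ i $ j) * ?z $ j) = (\<chi> i. complex_of_real l * ?z $ i)"
      by (simp add: vec_eq_iff)
  qed
  have "pf_eigenvalue a = l"
    unfolding pf_eigenvalue_def
  proof (rule the_equality)
    show "cplx_eigenvalue a (complex_of_real l) \<and> (\<forall>c. cplx_eigenvalue a c \<longrightarrow> cmod c \<le> l)"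
      using ce pf_dom[OF pa w aw] by blast
    fix l' assume h: "cplx_eigenvalue a (complex_of_real l') \<and> (\<forall>c. cplx_eigenvalue a c \<longrightarrow> cmod c \<le> l')"
    have "\<bar>l\<bar> \<le> l'" using h ce by fastforce
    moreover have "\<bar>l'\<bar> \<le> l" using pf_dom[OF pa w aw] h by fastforce
    ultimately show "l' = l" by linarith
  qed
  then show ?thesis using l w aw by blast
qed

lemma norm_props:
  assumes "is_norm N"
  shows "N 0 = 0" "\<And>c x. N (c *\<^sub>R x) = \<bar>c\<bar> * N x" "\<And>x. N x = 0 \<longleftrightarrow> x = 0" "\<And>x. N x \<ge> 0"
  using assms unfolding is_norm_def by auto

lemma eigpos:
  fixes a :: "real^'d^'d"
  assumes pa: "pos_mat a" and nn: "\<forall>i. 0 \<le> u$i" and u0: "u \<noteq> 0" and au: "a *v u = l *\<^sub>R u"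
  shows "l > 0 \<and> (\<forall>i. u$i > 0)"
proof -
  obtain j where "u$j \<noteq> 0" using u0 by (metis vec_eq_iff zero_index)
  then have uj: "u$j > 0" using nn by (simp add: order_le_neq_trans)
  have p: "(l *\<^sub>R u)$i > 0" for i using mv_pos[OF pa nn uj, of i] au by simp
  then have "l * u$j > 0" by simp
  then have l: "l > 0" using uj by (simp add: zero_less_mult_iff)
  have "u$i > 0" for i using p[of i] l by (simp add: zero_less_mult_iff)
  then show ?thesis using l by blast
qed

lemma eig_unique:
  fixes a :: "real^'d^'d"
  assumes pa: "pos_mat a" and N: "is_norm N" and u: "u \<in> S_plus N" and v: "v \<in> S_plus N"
    and au: "a *v u = l *\<^sub>R u" and av: "a *v v = l *\<^sub>R v"
  shows "u = v"
proof -
  have u0: "u \<noteq> 0" using u norm_props(1)[OF N] unfolding S_plus_def by force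
  have v0: "v \<noteq> 0" using v norm_props(1)[OF N] unfolding S_plus_def by force
  have up: "\<forall>i. u$i > 0" using eigpos[OF pa _ u0 au] u unfolding S_plus_def by blast
  have vp: "\<forall>i. v$i > 0" and l: "l > 0" using eigpos[OF pa _ v0 av] v unfolding S_plus_def by blast+
  define r where "r i = v$i / u$i" for i
  define M where "M = Min (range r)"
  have "M \<in> range r" unfolding M_def by (rule Min_in) auto
  then obtain k where k: "r k = M" by auto
  have rle: "r k \<le> r j" for j unfolding k M_def by (rule Min_le) auto
  define s where "s = r k"
  define w where "w = v - s *\<^sub>R u"
  have wnn: "\<forall>i. 0 \<le> w$i"
  proof
    fix i
    have "s \<le> v$i / u$i" using rle[of i] unfolding s_def r_def .
    then have "s * u$i \<le> v$i" using up by (simp add: le_divide_eq)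
    then show "0 \<le> w$i" unfolding w_def by simp
  qed
  have wk: "w$k = 0" unfolding w_def s_def r_def using up by (simp add: less_imp_neq[symmetric])
  have aw: "a *v w = l *\<^sub>R w" unfolding w_def using au av
    by (simp add: matrix_vector_mult_diff_distrib matrix_vector_mult_scaleR scaleR_diff_right)
  have w0: "w = 0"
  proof (rule ccontr)
    assume "w \<noteq> 0"
    then have "\<forall>i. w$i > 0" using eigpos[OF pa wnn _ aw] by blast
    then show False using wk by (metis less_irrefl)
  qed
  then have vs: "v = s *\<^sub>R u" unfolding w_def by simp
  have "s > 0" unfolding s_def r_def using up vp by simp
  moreover have "N v = \<bar>s\<bar> * N u" using vs norm_props(2)[OF N] by simp
  ultimately have "s = 1" using u v unfolding S_plus_def by simp
  then show ?thesis using vs by simp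
qed

lemma pf_vec:
  fixes a :: "real^'d^'d"
  assumes pa: "pos_mat a" and N: "is_norm N"
  shows "pf_vector N a \<in> S_plus N \<and> a *v pf_vector N a = pf_eigenvalue a *\<^sub>R pf_vector N a"
  unfolding pf_vector_def
proof (rule theI')
  obtain w where w: "\<forall>i. w$i > 0" and aw: "a *v w = pf_eigenvalue a *\<^sub>R w"
    using pf_eig[OF pa] by blast
  have "w \<noteq> 0" using w by (metis less_irrefl zero_index)
  then have Nw: "N w > 0" using norm_props(3,4)[OF N, of w] by (metis less_eq_real_def)
  define v where "v = (1 / N w) *\<^sub>R w"
  have "v \<in> S_plus N" unfolding S_plus_def v_def using Nw w norm_props(2)[OF N, of "1 / N w" w]
    by (simp add: less_imp_le)
  moreover have "a *v v = pf_eigenvalue a *\<^sub>R v" unfolding v_def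
    using aw by (simp add: matrix_vector_mult_scaleR)
  ultimately show "\<exists>!v. v \<in> S_plus N \<and> a *v v = pf_eigenvalue a *\<^sub>R v"
    using eig_unique[OF pa N] by blast
qed


lemma E_add: "exp (\<i> * complex_of_real (x + y)) = exp (\<i> * complex_of_real x) * exp (\<i> * complex_of_real y)"
  by (simp add: distrib_left exp_add)

theorem lemma2p4:
  fixes N :: "real^'d \<Rightarrow> real" and \<mu> :: "(real^'d^'d) measure"
  assumes "is_norm N"
    and "prob_space \<mu>" and "sets \<mu> = sets borel"
    and "cond_C \<mu>"
    and "closure (add_subgroup_gen (S_Gam \<mu>)) = UNIV"
  shows "\<not> arithmetic N \<mu>"
proof
  assume "arithmetic N \<mu>"
  then obtain t \<theta> and phi :: "real^'d \<Rightarrow> real" where t: "t > 0" and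
    H: "\<And>a x. a \<in> Gam \<mu> \<Longrightarrow> x \<in> V_Gam N \<mu> \<Longrightarrow>
        exp (\<i> * complex_of_real (t * ln (N (a *v x)) - \<theta> + (phi (act N a x) - phi x))) = 1"
    unfolding arithmetic_def by blast
  note N = assms(1)
  define G where "G = {s. exp (\<i> * complex_of_real (t * s)) = 1}"
  have SG: "S_Gam \<mu> \<subseteq> G"
  proof
    fix s assume "s \<in> S_Gam \<mu>"
    then obtain a where s: "s = ln (pf_eigenvalue a)" and aG: "a \<in> Gam \<mu>" and pa: "pos_mat a"
      unfolding S_Gam_def by blast
    define l where "l = pf_eigenvalue a"
    define v where "v = pf_vector N a"
    have l: "l > 0" using pf_eig[OF pa] l_def by simp
    have v: "v \<in> S_plus N" and av: "a *v v = l *\<^sub>R v" using pf_vec[OF pa N] v_def l_def by auto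
    have Nv: "N v = 1" using v unfolding S_plus_def by simp
    have vV: "v \<in> V_Gam N \<mu>" unfolding V_Gam_def v_def using aG pa
      by (intro subsetD[OF closure_subset]) blast
    have aaG: "a ** a \<in> Gam \<mu>" by (rule Gam_mult[OF aG aG])
    have aav: "(a ** a) *v v = (l * l) *\<^sub>R v"
      by (simp add: matrix_vector_mul_assoc[symmetric] av matrix_vector_mult_scaleR)
    have N1: "N (a *v v) = l" using av Nv l norm_props(2)[OF N] by simp
    have N2: "N ((a ** a) *v v) = l * l" using aav Nv l norm_props(2)[OF N] by simp
    have act1: "act N a v = v" unfolding act_def using N1 av l by simp
    have act2: "act N (a ** a) v = v" unfolding act_def using N2 aav l by simp
    have h1: "exp (\<i> * complex_of_real (t * ln l - \<theta>)) = 1"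
      using H[OF aG vV] unfolding N1 act1 by (simp only: diff_self add_0_right)
    have h2: "exp (\<i> * complex_of_real (t * ln (l * l) - \<theta>)) = 1"
      using H[OF aaG vV] unfolding N2 act2 by (simp only: diff_self add_0_right)
    have e: "t * ln (l * l) - \<theta> = (t * ln l - \<theta>) + t * ln l" using l by (simp add: ln_mult algebra_simps)
    have "exp (\<i> * complex_of_real (t * ln (l * l) - \<theta>)) =
      exp (\<i> * complex_of_real (t * ln l - \<theta>)) * exp (\<i> * complex_of_real (t * ln l))"
      unfolding e by (rule E_add)
    then have "exp (\<i> * complex_of_real (t * ln l)) = 1" using h1 h2 by simp
    then show "s \<in> G" unfolding G_def s l_def[symmetric] by simp
  qed
  have "add_subgroup_gen (S_Gam \<mu>) \<subseteq> G"
    unfolding add_subgroup_gen_def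
  proof (rule Inter_lower, intro CollectI conjI ballI)
    show "S_Gam \<mu> \<subseteq> G" using SG .
    show "0 \<in> G" unfolding G_def by simp
    fix x y assume "x \<in> G" "y \<in> G"
    then show "x + y \<in> G" unfolding G_def using E_add[of "t*x" "t*y"] by (simp only: distrib_left mem_Collect_eq mult_1_left)
  next
    fix x assume "x \<in> G"
    have "exp (\<i> * complex_of_real (t * - x)) = inverse (exp (\<i> * complex_of_real (t * x)))"
      by (simp add: exp_minus[symmetric])
    then show "- x \<in> G" using \<open>x \<in> G\<close> unfolding G_def by simp
  qed
  moreover have "closed G" unfolding G_def
    by (intro closed_Collect_eq continuous_intros)
  ultimately have "closure (add_subgroup_gen (S_Gam \<mu>)) \<subseteq> G" by (rule closure_minimal)
  then have "pi / t \<in> G" using assms(5) by blast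
  then show False unfolding G_def using t by simp
qed

end
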